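(* Let $n$ be odd and $\alpha>0$ with $\alpha\,bin(n,\tfrac12,i)\le1$ for all $i$. Let $P_e$ be the distribution on $\{0,1\}^{n+1}$ (coordinates indexed by $i\in\{0,\ldots,n\}$) in which coordinate $i$ is independently $1$ with probability $S_e(i)$ and $0$ otherwise. Then $\sum_{u\in\{0,1\}^{n+1}}\sqrt{P_e(u)}\le e^{\sqrt\alpha\,(2\pi n)^{1/4}}$. The same bound holds for the analogous distribution $P_o$ induced by $S_o$.
   Context: $bin(n,p,k)=\binom nk p^k(1-p)^{n-k}$. $S_e(i)=\alpha\,bin(n,\tfrac12,i)$ for even $i$ and $0$ for odd $i$; $S_o(i)=\alpha\,bin(n,\tfrac12,i)$ for odd $i$ and $0$ for even $i$, for $i\in\{0,\ldots,n\}$. *)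

theory Defs
  imports "HOL-Analysis.Analysis"
begin

definition bin :: "nat \<Rightarrow> real \<Rightarrow> nat \<Rightarrow> real" where
  "bin n p k = real (n choose k) * p ^ k * (1 - p) ^ (n - k)"

definition S_e :: "real \<Rightarrow> nat \<Rightarrow> nat \<Rightarrow> real" where
  "S_e \<alpha> n i = (if even i then \<alpha> * bin n (1/2) i else 0)"

definition S_o :: "real \<Rightarrow> nat \<Rightarrow> nat \<Rightarrow> real" where
  "S_o \<alpha> n i = (if odd i then \<alpha> * bin n (1/2) i else 0)"

text \<open>A point u of {0,1}^{n+1} is a function u :: nat => bool, extensional outside {0..n}.\<close>
definition prod_dist :: "(nat \<Rightarrow> real) \<Rightarrow> nat \<Rightarrow> (nat \<Rightarrow> bool) \<Rightarrow> real" where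
  "prod_dist S n u = (\<Prod>i\<in>{0..n}. if u i then S i else 1 - S i)"

definition cube :: "nat \<Rightarrow> (nat \<Rightarrow> bool) set" where
  "cube n = {0..n} \<rightarrow>\<^sub>E (UNIV :: bool set)"

end

theory Submission imports Defs begin
declare binomial_Suc_Suc[simp del]

lemma poly_ineq: fixes a b :: nat shows "b*(3*a+2*b)^2 \<le> (2*a+b)*(a+2*b)^2"
proof -
  have "(2*a+b)*(a+2*b)^2 = b*(3*a+2*b)^2 + 2*a^3"
    by (simp add: algebra_simps power2_eq_square power3_eq_cube)
  then show ?thesis by simp
qed

lemma ratio_nat: fixes t m :: nat assumes "t \<le> m"
  shows "(m+1-t)*(2*m+2+t)^2 \<le> (m+1+t)*(2*m+2-t)^2"
proof -
  obtain d where d: "m+1 = t+d" using assms by (metis le_add_diff_inverse le_SucI Suc_eq_plus1)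
  have e1: "m+1-t = d" "2*m+2+t = 3*t+2*d" "m+1+t = 2*t+d" "2*m+2-t = t+2*d" using d by auto
  show ?thesis unfolding e1 by (rule poly_ineq)
qed

lemma choose_step: "(k+1) * (n choose (k+1)) = (n - k) * (n choose k)"
  using binomial_absorption[of k n] binomial_absorb_comp[of n k] by simp

lemma cb_rec_nat: "((2*k+1) choose k) * (k+1) = (2*k+1) * ((2*k) choose k)"
proof -
  have b: "Suc (2*k) * ((2*k) choose k) = (Suc (2*k) choose Suc k) * Suc k" by (rule Suc_times_binomial_eq)
  have c: "(Suc(2*k)) choose (Suc k) = (2*k+1) choose k" using binomial_symmetric[of "Suc k" "2*k+1"] by simp
  show ?thesis using b c by (simp del: binomial_Suc_Suc add: algebra_simps)
qed

lemma cb_rec_nat2: "((2*(k+1)) choose (k+1)) * (k+1) = 2*(2*k+1) * ((2*k) choose k)"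
proof -
  have a: "Suc k * (Suc (2*k+1) choose Suc k) = Suc (2*k+1) * ((2*k+1) choose k)" by (rule Suc_times_binomial)
  have "(k+1) * (((2*(k+1)) choose (k+1)) * (k+1)) = (k+1) * (2*(2*k+1) * ((2*k) choose k))"
  proof -
    have "(k+1) * (((2*(k+1)) choose (k+1)) * (k+1)) = (k+1) * (Suc (2*k+1) * ((2*k+1) choose k))"
      using a by (simp del: binomial_Suc_Suc add: algebra_simps)
    also have "\<dots> = 2 * (((2*k+1) choose k) * (k+1)) * (k+1)" by (simp del: binomial_Suc_Suc add: algebra_simps)
    also have "\<dots> = (k+1) * (2*(2*k+1) * ((2*k) choose k))" unfolding cb_rec_nat by (simp add: algebra_simps)
    finally show ?thesis .
  qed
  moreover have "k+1 \<noteq> 0" by simp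
  ultimately show ?thesis by (metis mult_left_cancel)
qed

lemma div_le1: "0 < a \<Longrightarrow> b \<le> a \<Longrightarrow> b / a \<le> (1::real)" by simp
lemma le_div1: "0 < a \<Longrightarrow> a \<le> b \<Longrightarrow> 1 \<le> b / (a::real)" by simp

definition cc :: "nat \<Rightarrow> real" where "cc k = real ((2*k) choose k) / 4^k"

lemma aux_alg: "K > 0 \<Longrightarrow> p > 0 \<Longrightarrow> (2*a*x/K)/(4*p) = a*(x/p)/(2*(K::real))"
  by (simp add: field_simps)

lemma cc_rec: "cc (k+1) = (2*real k+1) * cc k / (2*(real k+1))"
proof -
  have "real ((2*(k+1)) choose (k+1)) * (k+1) = 2*(2*k+1) * real ((2*k) choose k)"
  proof -
    have "real (((2*(k+1)) choose (k+1)) * (k+1)) = real (2*(2*k+1) * ((2*k) choose k))"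
      by (simp only: cb_rec_nat2)
    then show ?thesis by (simp only: of_nat_mult of_nat_add of_nat_1 of_nat_numeral)
  qed
  then have h: "real ((2*(k+1)) choose (k+1)) = 2*(2*real k+1) * real ((2*k) choose k) / (real k+1)"
    by (simp add: field_simps)
  have "cc (k+1) = (2*(2*real k+1) * real ((2*k) choose k) / (real k+1)) / (4 * 4^k)"
    unfolding cc_def h by simp
  also have "\<dots> = (2*real k+1) * cc k / (2*(real k+1))"
    unfolding cc_def by (rule aux_alg) auto
  finally show ?thesis .
qed

lemma cc_nonneg: "cc k \<ge> 0" unfolding cc_def by simp

lemma cc_upper: "cc k ^ 2 * (2*real k+1) \<le> 1"
proof (induction k)
  case 0 then show ?case by (simp add: cc_def)
next
  case (Suc k)
  have "cc (Suc k) ^ 2 * (2*real (Suc k)+1) = (cc k ^ 2 * (2*real k+1)) * ((2*real k+1)*(2*real k+3) / (4*(real k+1)^2))"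
    unfolding Suc_eq_plus1 cc_rec by (simp add: field_simps power2_eq_square)
  also have "\<dots> \<le> 1 * ((2*real k+1)*(2*real k+3) / (4*(real k+1)^2))"
    using Suc.IH by (intro mult_right_mono) auto
  also have "\<dots> \<le> 1" unfolding mult_1_left by (rule div_le1) (simp, simp add: power2_eq_square algebra_simps)
  finally show ?case .
qed

lemma cc_lower: "k \<ge> 1 \<Longrightarrow> 1 \<le> 4 * real k * cc k ^ 2"
proof (induction k rule: nat_induct_at_least)
  case base then show ?case by (simp add: cc_def power2_eq_square)
next
  case (Suc k)
  have pos: "0 < 4*real k*(real k+1)" using Suc by simp
  have "1 \<le> (4 * real k * cc k ^ 2) * ((2*real k+1)^2 / (4*real k*(real k+1)))"
  proof -
    have "1 \<le> (2*real k+1)^2 / (4*real k*(real k+1))"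
      by (rule le_div1) (use pos in simp, simp add: power2_eq_square algebra_simps)
    also have "\<dots> \<le> (4 * real k * cc k ^ 2) * ((2*real k+1)^2 / (4*real k*(real k+1)))"
      using mult_right_mono[OF Suc.IH, of "(2*real k+1)^2 / (4*real k*(real k+1))"] pos by simp
    finally show ?thesis .
  qed
  also have "\<dots> = 4 * real (Suc k) * cc (Suc k) ^ 2"
    unfolding Suc_eq_plus1 cc_rec using pos by (simp add: field_simps power2_eq_square)
  finally show ?case .
qed


lemma step_nat:
  assumes n: "n = 2*m+1" and mi: "m \<le> i" and "i < n"
  shows "(n choose (i+1)) * ((2*n+1) choose (i+m+1))^2 \<le> (n choose i) * ((2*n+1) choose (i+m+1+1))^2"
proof -
  define j where "j = i+m+1"
  define N where "N = 2*n+1"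
  define A where "A = n choose i"
  define B where "B = N choose j"
  define t where "t = i - m"
  have t: "t \<le> m" "i = m + t" using assms unfolding t_def by auto
  have h1: "(i+1) * (n choose (i+1)) = (n-i) * A" unfolding A_def by (rule choose_step)
  have h2: "(j+1) * (N choose (j+1)) = (N-j) * B" unfolding B_def by (rule choose_step)
  have e: "n-i = m+1-t" "j+1 = 2*m+2+t" "i+1 = m+1+t" "N-j = 2*m+2-t"
    using t n unfolding j_def N_def by auto
  have poly: "(n-i)*(j+1)^2 \<le> (i+1)*(N-j)^2" unfolding e by (rule ratio_nat[OF t(1)])
  have "(n choose (i+1)) * B^2 * ((i+1)*(j+1)^2) = ((i+1) * (n choose (i+1))) * (B^2*(j+1)^2)"
    by (simp only: ac_simps)
  also have "\<dots> = ((n-i)*(j+1)^2) * (A*B^2)" unfolding h1 by (simp only: ac_simps)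
  also have "\<dots> \<le> ((i+1)*(N-j)^2) * (A*B^2)" by (rule mult_right_mono[OF poly]) simp
  also have "\<dots> = A * (i+1) * ((N-j)*B)^2" by (simp only: ac_simps power_mult_distrib)
  also have "\<dots> = A * (N choose (j+1))^2 * ((i+1)*(j+1)^2)"
    unfolding h2[symmetric] by (simp only: ac_simps power_mult_distrib)
  finally have "(n choose (i+1)) * B^2 * ((i+1)*(j+1)^2) \<le> A * (N choose (j+1))^2 * ((i+1)*(j+1)^2)" .
  then have "(n choose (i+1)) * B^2 \<le> A * (N choose (j+1))^2"
    by (subst (asm) mult_le_cancel2) simp
  then show ?thesis unfolding A_def B_def N_def j_def .
qed

definition pp :: "nat \<Rightarrow> nat \<Rightarrow> real" where "pp n i = real (n choose i) / 2^n"

lemma pp_nonneg: "pp n i \<ge> 0" unfolding pp_def by simp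
lemma pp_pos: "i \<le> n \<Longrightarrow> pp n i > 0" unfolding pp_def by simp

lemma step_real:
  assumes n: "n = 2*m+1" and mi: "m \<le> i" and "i < n"
  shows "pp n (i+1) * pp (2*n+1) (i+m+1) ^ 2 \<le> pp n i * pp (2*n+1) (i+m+1+1) ^ 2"
proof -
  have "real ((n choose (i+1)) * ((2*n+1) choose (i+m+1))^2) \<le> real ((n choose i) * ((2*n+1) choose (i+m+1+1))^2)"
    using step_nat[OF assms] by (simp only: of_nat_le_iff)
  then have "real ((n choose (i+1)) * ((2*n+1) choose (i+m+1))^2) / (2^n * (2^(2*n+1))^2)
     \<le> real ((n choose i) * ((2*n+1) choose (i+m+1+1))^2) / (2^n * (2^(2*n+1))^2)"
    by (rule divide_right_mono) simp
  then show ?thesis unfolding pp_def by (simp add: power_divide)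
qed

lemma induct_up:
  assumes n: "n = 2*m+1" and K: "K \<ge> 0"
    and base: "pp n m \<le> K * pp (2*n+1) (2*m+1) ^ 2"
  shows "m + d \<le> n \<Longrightarrow> pp n (m+d) \<le> K * pp (2*n+1) (m+d+m+1) ^ 2"
proof (induction d)
  case 0
  have e: "m+0+m+1 = 2*m+1" "m+0 = m" by simp_all
  show ?case by (subst e(1), subst e(2)) (rule base)
next
  case (Suc d)
  define i where "i = m+d"
  have i: "m \<le> i" "i < n" using Suc.prems unfolding i_def by auto
  have IH: "pp n i \<le> K * pp (2*n+1) (i+m+1) ^ 2" using Suc i_def by simp
  have qpos: "pp (2*n+1) (i+m+1) > 0" using i n by (intro pp_pos) simp
  have "pp n (i+1) * pp (2*n+1) (i+m+1) ^ 2 \<le> pp n i * pp (2*n+1) (i+m+1+1) ^ 2"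
    by (rule step_real[OF n i])
  also have "\<dots> \<le> (K * pp (2*n+1) (i+m+1) ^ 2) * pp (2*n+1) (i+m+1+1) ^ 2"
    by (rule mult_right_mono[OF IH]) simp
  finally have "pp n (i+1) * pp (2*n+1) (i+m+1) ^ 2 \<le> (K * pp (2*n+1) (i+m+1+1) ^ 2) * pp (2*n+1) (i+m+1) ^ 2"
    by (simp only: ac_simps)
  then have "pp n (i+1) \<le> K * pp (2*n+1) (i+m+1+1) ^ 2"
    using qpos by (subst (asm) mult_le_cancel_right) (auto)
  then show ?case unfolding i_def by (simp add: algebra_simps)
qed


lemma aux_alg2: "K > 0 \<Longrightarrow> p > 0 \<Longrightarrow> a*x/K/(2*p) = a*(x/p)/(2*(K::real))"
  by (simp add: field_simps)

lemma pp_center1: "pp (2*m+1) m = (2*real m+1) * cc m / (2*(real m+1))"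
proof -
  define C1 where "C1 = (2*m+1) choose m"
  define C2 where "C2 = (2*m) choose m"
  have "real (C1 * (m+1)) = real ((2*m+1) * C2)"
    unfolding C1_def C2_def by (simp only: cb_rec_nat)
  then have "real C1 * (real m+1) = (2*real m+1) * real C2"
    by (simp add: algebra_simps)
  then have "real ((2*m+1) choose m) * (real m+1) = (2*real m+1) * real ((2*m) choose m)"
    unfolding C1_def C2_def .
  then have h: "real ((2*m+1) choose m) = (2*real m+1) * real ((2*m) choose m) / (real m+1)"
    by (simp add: field_simps)
  have "pp (2*m+1) m = (2*real m+1) * real ((2*m) choose m) / (real m+1) / (2 * 4^m)"
    unfolding pp_def h by (simp add: power_mult)
  also have "\<dots> = (2*real m+1) * cc m / (2*(real m+1))"
    unfolding cc_def by (rule aux_alg2) auto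
  finally show ?thesis .
qed

lemma pp_center2: "pp (4*m+3) (2*m+1) = (4*real m+3) * cc (2*m+1) / (4*(real m+1))"
proof -
  define C1 where "C1 = (4*m+3) choose (2*m+1)"
  define C2 where "C2 = (2*(2*m+1)) choose (2*m+1)"
  have e: "2*(2*m+1)+1 = 4*m+3" by simp
  have "C1 * ((2*m+1)+1) = (4*m+3) * C2"
    using cb_rec_nat[of "2*m+1"] unfolding e C1_def C2_def .
  then have "real (C1 * ((2*m+1)+1)) = real ((4*m+3) * C2)" by (simp only:)
  then have "real C1 * (2*real m+2) = (4*real m+3) * real C2"
    by (simp add: algebra_simps)
  then have "real ((4*m+3) choose (2*m+1)) * (2*real m+2) = (4*real m+3) * real ((2*(2*m+1)) choose (2*m+1))"
    unfolding C1_def C2_def .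
  then have h: "real ((4*m+3) choose (2*m+1)) = (4*real m+3) * real ((2*(2*m+1)) choose (2*m+1)) / (2*real m+2)"
    by (simp add: field_simps)
  have "pp (4*m+3) (2*m+1) = (4*real m+3) * real ((2*(2*m+1)) choose (2*m+1)) / (2*real m+2) / (2 * 4^(2*m+1))"
    unfolding pp_def h by (simp add: power_mult power_add)
  also have "\<dots> = (4*real m+3) * cc (2*m+1) / (2*(2*real m+2))"
    unfolding cc_def by (rule aux_alg2) auto
  finally show ?thesis by simp
qed

lemma alg_center0:
  fixes a b c y z :: real
  assumes a: "a > 0" and b: "b > 0" and c: "c > 0" and y: "y \<ge> 0" and z: "z \<ge> 0"
    and rel: "c^2 = 8*a*b + 1"
    and hu: "y^2*a \<le> 1" and hv: "1 \<le> 4*a*z^2"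
  shows "a*y/(2*b) \<le> 4 * sqrt a * (c*z/(4*b))^2"
proof -
  define P where "P = a*y/(2*b)"
  define Q where "Q = c*z/(4*b)"
  have P0: "P \<ge> 0" unfolding P_def using a b y by simp
  have "P^2 = a*(y^2*a) / (4*b^2)"
    unfolding P_def using b by (simp add: power2_eq_square field_simps)
  also have "\<dots> \<le> a*1 / (4*b^2)"
    using hu a by (intro divide_right_mono mult_left_mono) auto
  finally have P2: "P^2 \<le> a / (4*b^2)" by simp
  have v2: "z^2 \<ge> 1/(4*a)" using hv a by (simp add: field_simps)
  have v4: "(z^2)^2 \<ge> (1/(4*a))^2"
    by (rule power_mono[OF v2]) (use a in simp)
  have "16*a*Q^4 = a*c^4 * (z^2)^2 / (16*b^4)"
    unfolding Q_def using b by (simp add: field_simps power2_eq_square power4_eq_xxxx)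
  also have "\<dots> \<ge> a*c^4 * (1/(4*a))^2 / (16*b^4)"
    using v4 a b by (intro divide_right_mono mult_left_mono) auto
  finally have Q4: "16*a*Q^4 \<ge> a*c^4 * (1/(4*a))^2 / (16*b^4)" .
  have "a*c^4 * (1/(4*a))^2 / (16*b^4) = (c^2)^2 / (256*a*b^4)"
    using a b by (simp add: field_simps power2_eq_square power4_eq_xxxx)
  also have "\<dots> \<ge> (8*a*b)^2 / (256*a*b^4)"
    unfolding rel using a b by (intro divide_right_mono power_mono) auto
  also have "(8*a*b)^2 / (256*a*b^4) = a / (4*b^2)"
    using a b by (simp add: field_simps power2_eq_square power4_eq_xxxx)
  finally have "a / (4*b^2) \<le> a*c^4 * (1/(4*a))^2 / (16*b^4)" .
  with P2 Q4 have "P^2 \<le> 16*a*Q^4" by linarith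
  then have "sqrt (P^2) \<le> sqrt (16*a*Q^4)" by (rule real_sqrt_le_mono)
  also have "sqrt (16*a*Q^4) = 4 * sqrt a * Q^2"
  proof -
    have "Q^4 = (Q^2)^2" by (simp add: power_mult[symmetric])
    moreover have "sqrt ((Q^2)^2) = Q^2" unfolding real_sqrt_abs by simp
    ultimately have "sqrt (Q^4) = Q^2" by (simp only:)
    then show ?thesis by (simp add: real_sqrt_mult)
  qed
  finally have "sqrt (P^2) \<le> 4 * sqrt a * Q^2" .
  moreover have "sqrt (P^2) = P" using P0 unfolding real_sqrt_abs by simp
  ultimately have "P \<le> 4 * sqrt a * Q^2" by simp
  then show ?thesis unfolding P_def Q_def .
qed

lemma alg_center:
  fixes x y z :: real
  assumes x: "x \<ge> 0" and y: "y \<ge> 0" and z: "z \<ge> 0"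
    and hu: "y^2*(2*x+1) \<le> 1" and hv: "1 \<le> 4*(2*x+1)*z^2"
  shows "(2*x+1)*y/(2*(x+1)) \<le> 4 * sqrt(2*x+1)*((4*x+3)*z/(4*(x+1)))^2"
proof (rule alg_center0)
  show "(4*x+3)^2 = 8*(2*x+1)*(x+1) + 1" by (simp add: power2_eq_square algebra_simps)
qed (use assms in auto)


lemma key_center:
  assumes n: "n = 2*m+1"
  shows "pp n m \<le> 4 * sqrt n * pp (2*n+1) (2*m+1) ^ 2"
proof -
  have e: "2*n+1 = 4*m+3" using n by simp
  have rn: "real n = 2*real m+1" using n by simp
  have hu: "cc m ^ 2 * (2*real m+1) \<le> 1" by (rule cc_upper)
  have hv: "1 \<le> 4*(2*real m+1)*cc (2*m+1) ^ 2" using cc_lower[of "2*m+1"] by (simp add: algebra_simps)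
  have H: "(2*real m+1)*cc m/(2*(real m+1)) \<le> 4 * sqrt(2*real m+1)*((4*real m+3)*cc (2*m+1)/(4*(real m+1)))^2"
    by (rule alg_center) (use hu hv cc_nonneg in auto)
  have p1: "pp n m = (2*real m+1)*cc m/(2*(real m+1))" using pp_center1[of m] n by simp
  have p2: "pp (2*n+1) (2*m+1) = (4*real m+3)*cc(2*m+1)/(4*(real m+1))" unfolding e by (rule pp_center2)
  have s: "sqrt (real n) = sqrt(2*real m+1)" using rn by simp
  show ?thesis unfolding p1 p2 s by (rule H)
qed

lemma pp_sym: "i \<le> n \<Longrightarrow> pp n i = pp n (n - i)"
  unfolding pp_def using binomial_symmetric by metis

lemma key:
  assumes n: "n = 2*m+1" and i: "i \<le> n"
  shows "pp n i \<le> 4 * sqrt n * pp (2*n+1) (i+m+1) ^ 2"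
proof -
  have up: "pp n i \<le> 4 * sqrt n * pp (2*n+1) (i+m+1) ^ 2" if "m \<le> i" "i \<le> n" for i
  proof -
    have "pp n (m + (i-m)) \<le> 4 * sqrt n * pp (2*n+1) (m+(i-m)+m+1) ^ 2"
      by (rule induct_up[OF n _ key_center[OF n]]) (use that in auto)
    moreover have "m + (i-m) = i" using that by simp
    ultimately show ?thesis by simp
  qed
  show ?thesis
  proof (cases "m \<le> i")
    case True then show ?thesis using up i by simp
  next
    case False
    have "pp n i = pp n (n-i)" using i by (rule pp_sym)
    also have "\<dots> \<le> 4 * sqrt n * pp (2*n+1) ((n-i)+m+1) ^ 2" using False n by (intro up) auto
    also have "pp (2*n+1) ((n-i)+m+1) = pp (2*n+1) (i+m+1)"
    proof -
      have "(n-i)+m+1 = (2*n+1) - (i+m+1)" using False n by simp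
      moreover have "i+m+1 \<le> 2*n+1" using i n by simp
      ultimately show ?thesis using pp_sym[of "i+m+1" "2*n+1"] by simp
    qed
    finally show ?thesis .
  qed
qed

lemma half_sum:
  assumes "N > 0"
  shows "(\<Sum>j\<le>N. if even j = b then pp N j else 0) = 1/2"
proof -
  have "(\<Sum>j\<le>N. if even j = b then pp N j else 0) = (\<Sum>j\<le>N. if even j = b then real (N choose j) else 0) / 2^N"
    unfolding pp_def sum_divide_distrib by (intro sum.cong) auto
  also have "\<dots> = 1/2"
  proof (cases b)
    case True
    then show ?thesis using choose_even_sum[OF assms, where 'a=real] by (simp add: field_simps)
  next
    case False
    then show ?thesis using choose_odd_sum[OF assms, where 'a=real] by (simp add: field_simps)
  qed
  finally show ?thesis .
qed

lemma parity_sum: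
  assumes n: "n = 2*m+1"
  shows "(\<Sum>i\<in>{0..n}. if even i = b then pp (2*n+1) (i+m+1) else 0) \<le> 1/2"
proof -
  define c where "c = (b = even (m+1))"
  have "(\<Sum>i\<in>{0..n}. if even i = b then pp (2*n+1) (i+m+1) else 0)
      = (\<Sum>i\<in>{0..n}. (\<lambda>j. if even j = c then pp (2*n+1) j else 0) (i+m+1))"
    unfolding c_def by (intro sum.cong) auto
  also have "\<dots> = (\<Sum>j\<in>(\<lambda>i. i+m+1) ` {0..n}. if even j = c then pp (2*n+1) j else 0)"
    by (rule sum.reindex[symmetric, unfolded comp_def]) (auto simp: inj_on_def)
  also have "\<dots> \<le> (\<Sum>j\<le>2*n+1. if even j = c then pp (2*n+1) j else 0)"
    by (rule sum_mono2) (use n in \<open>auto simp: pp_nonneg\<close>)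
  also have "\<dots> = 1/2" by (rule half_sum) simp
  finally show ?thesis .
qed


lemma bin_pp: "i \<le> n \<Longrightarrow> bin n (1/2) i = pp n i"
proof -
  assume i: "i \<le> n"
  have "bin n (1/2) i = real (n choose i) * ((1/2) ^ i * (1/2) ^ (n-i))"
    unfolding bin_def by (simp add: mult.assoc)
  also have "(1/2::real) ^ i * (1/2) ^ (n-i) = (1/2) ^ n"
    unfolding power_add[symmetric] using i by simp
  finally show ?thesis unfolding pp_def by (simp add: power_one_over)
qed

lemma bin_nonneg: "bin n (1/2) i \<ge> 0" unfolding bin_def by simp

lemma sqrt_prod: "sqrt (prod f A) = prod (\<lambda>i. sqrt (f i)) A"
  by (induction A rule: infinite_finite_induct) (auto simp: real_sqrt_mult)

lemma cube_sum:
  "(\<Sum>u\<in>cube n. sqrt (prod_dist S n u)) = (\<Prod>i\<in>{0..n}. sqrt (S i) + sqrt (1 - S i))"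
proof -
  have "(\<Prod>i\<in>{0..n}. sqrt (S i) + sqrt (1 - S i))
      = (\<Prod>i\<in>{0..n}. \<Sum>b\<in>(UNIV::bool set). (if b then sqrt (S i) else sqrt (1 - S i)))"
    by (simp add: UNIV_bool add.commute)
  also have "\<dots> = (\<Sum>g\<in>PiE {0..n} (\<lambda>_. UNIV). \<Prod>i\<in>{0..n}. (if g i then sqrt (S i) else sqrt (1 - S i)))"
    by (rule prod_sum_PiE) auto
  also have "\<dots> = (\<Sum>u\<in>cube n. sqrt (prod_dist S n u))"
    unfolding cube_def prod_dist_def sqrt_prod by (intro sum.cong prod.cong) auto
  finally show ?thesis by simp
qed

lemma prod_exp:
  assumes "finite A" and "\<And>i. i \<in> A \<Longrightarrow> 0 \<le> s i \<and> s i \<le> 1"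
  shows "(\<Prod>i\<in>A. sqrt (s i) + sqrt (1 - s i)) \<le> exp (\<Sum>i\<in>A. sqrt (s i))"
proof -
  have "(\<Prod>i\<in>A. sqrt (s i) + sqrt (1 - s i)) \<le> (\<Prod>i\<in>A. exp (sqrt (s i)))"
  proof (rule prod_mono)
    fix i assume i: "i \<in> A"
    have "sqrt (1 - s i) \<le> sqrt 1" using assms(2)[OF i] by (intro real_sqrt_le_mono) auto
    then have "sqrt (s i) + sqrt (1 - s i) \<le> 1 + sqrt (s i)" by simp
    also have "\<dots> \<le> exp (sqrt (s i))" by (rule exp_ge_add_one_self)
    finally show "0 \<le> sqrt (s i) + sqrt (1 - s i) \<and> sqrt (s i) + sqrt (1 - s i) \<le> exp (sqrt (s i))"
      using assms(2)[OF i] by simp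
  qed
  also have "\<dots> = exp (\<Sum>i\<in>A. sqrt (s i))" using assms(1) by (simp add: exp_sum)
  finally show ?thesis .
qed

lemma powr_quarter: "x \<ge> 0 \<Longrightarrow> x powr (1/4) = sqrt (sqrt (x::real))"
proof -
  assume x: "x \<ge> 0"
  have "sqrt (sqrt x) = (x powr (1/2)) powr (1/2)" using x by (simp add: powr_half_sqrt)
  also have "\<dots> = x powr (1/4)" by (simp add: powr_powr)
  finally show ?thesis by simp
qed

lemma sum_bound:
  assumes n: "n = 2*m+1" and a: "\<alpha> > 0"
  shows "(\<Sum>i\<in>{0..n}. if even i = b then sqrt (\<alpha> * bin n (1/2) i) else 0)
         \<le> sqrt \<alpha> * (2 * pi * real n) powr (1/4)"
proof -
  define r where "r = sqrt (sqrt (real n))"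
  have r0: "r \<ge> 0" unfolding r_def by simp
  have "(\<Sum>i\<in>{0..n}. if even i = b then sqrt (\<alpha> * bin n (1/2) i) else 0)
      \<le> (\<Sum>i\<in>{0..n}. (2 * sqrt \<alpha> * r) * (if even i = b then pp (2*n+1) (i+m+1) else 0))"
  proof (rule sum_mono)
    fix i assume i: "i \<in> {0..n}"
    have "sqrt (\<alpha> * bin n (1/2) i) \<le> (2 * sqrt \<alpha> * r) * pp (2*n+1) (i+m+1)"
    proof -
      have "sqrt (\<alpha> * bin n (1/2) i) = sqrt \<alpha> * sqrt (pp n i)"
        using i by (simp add: bin_pp real_sqrt_mult)
      also have "sqrt (pp n i) \<le> sqrt (4 * sqrt n * pp (2*n+1) (i+m+1) ^ 2)"
        using key[OF n] i by (intro real_sqrt_le_mono) auto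
      also have "\<dots> = 2 * r * pp (2*n+1) (i+m+1)"
        unfolding r_def using pp_nonneg[of "2*n+1" "i+m+1"] by (simp add: real_sqrt_mult)
      finally show ?thesis using a by (simp add: mult_left_mono mult.assoc)
    qed
    then show "(if even i = b then sqrt (\<alpha> * bin n (1/2) i) else 0)
        \<le> (2 * sqrt \<alpha> * r) * (if even i = b then pp (2*n+1) (i+m+1) else 0)" by simp
  qed
  also have "\<dots> = (2 * sqrt \<alpha> * r) * (\<Sum>i\<in>{0..n}. if even i = b then pp (2*n+1) (i+m+1) else 0)"
    by (simp add: sum_distrib_left)
  also have "\<dots> \<le> (2 * sqrt \<alpha> * r) * (1/2)"
    using parity_sum[OF n] a r0 by (intro mult_left_mono) auto
  also have "\<dots> = sqrt \<alpha> * r" by simp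
  also have "\<dots> \<le> sqrt \<alpha> * (2 * pi * real n) powr (1/4)"
  proof -
    have "real n \<le> 2 * pi * real n" using pi_gt3 by (simp add: mult_le_cancel_right1)
    then have "r \<le> sqrt (sqrt (2 * pi * real n))" unfolding r_def
      by (intro real_sqrt_le_mono) auto
    also have "\<dots> = (2 * pi * real n) powr (1/4)" by (rule powr_quarter[symmetric]) simp
    finally show ?thesis using a by (intro mult_left_mono) auto
  qed
  finally show ?thesis .
qed

lemma main_gen:
  assumes n: "n = 2*m+1" and a: "\<alpha> > 0"
    and h: "\<forall>i\<in>{0..n}. \<alpha> * bin n (1/2) i \<le> 1"
    and S: "\<And>i. S i = (if even i = b then \<alpha> * bin n (1/2) i else 0)"
  shows "(\<Sum>u\<in>cube n. sqrt (prod_dist S n u)) \<le> exp (sqrt \<alpha> * (2 * pi * real n) powr (1/4))"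
proof -
  have "(\<Sum>u\<in>cube n. sqrt (prod_dist S n u)) = (\<Prod>i\<in>{0..n}. sqrt (S i) + sqrt (1 - S i))"
    by (rule cube_sum)
  also have "\<dots> \<le> exp (\<Sum>i\<in>{0..n}. sqrt (S i))"
  proof (rule prod_exp)
    fix i assume "i \<in> {0..n}"
    then show "0 \<le> S i \<and> S i \<le> 1" using h a bin_nonneg[of n i] unfolding S by auto
  qed simp
  also have "(\<Sum>i\<in>{0..n}. sqrt (S i)) = (\<Sum>i\<in>{0..n}. if even i = b then sqrt (\<alpha> * bin n (1/2) i) else 0)"
    unfolding S by (intro sum.cong) auto
  also have "exp \<dots> \<le> exp (sqrt \<alpha> * (2 * pi * real n) powr (1/4))"
    using sum_bound[OF n a] by simp
  finally show ?thesis .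
qed

theorem lemma4:
  fixes n :: nat and \<alpha> :: real
  assumes "odd n" and "\<alpha> > 0"
    and "\<forall>i\<in>{0..n}. \<alpha> * bin n (1/2) i \<le> 1"
  shows "(\<Sum>u\<in>cube n. sqrt (prod_dist (S_e \<alpha> n) n u))
           \<le> exp (sqrt \<alpha> * (2 * pi * real n) powr (1/4)) \<and>
         (\<Sum>u\<in>cube n. sqrt (prod_dist (S_o \<alpha> n) n u))
           \<le> exp (sqrt \<alpha> * (2 * pi * real n) powr (1/4))"
proof -
  obtain m where n: "n = 2*m+1" using assms(1) oddE by blast
  show ?thesis
  proof
    show "(\<Sum>u\<in>cube n. sqrt (prod_dist (S_e \<alpha> n) n u)) \<le> exp (sqrt \<alpha> * (2 * pi * real n) powr (1/4))"
      by (rule main_gen[OF n assms(2,3), where b=True]) (simp add: S_e_def)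
    show "(\<Sum>u\<in>cube n. sqrt (prod_dist (S_o \<alpha> n) n u)) \<le> exp (sqrt \<alpha> * (2 * pi * real n) powr (1/4))"
      by (rule main_gen[OF n assms(2,3), where b=False]) (simp add: S_o_def)
  qed
qed

end
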